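(* Let $A$ be a commutative ring. For $X\in B$ and $a_1,\ldots,a_n\in A$ ($n\ge0$) with $E(a_n)\cdots E(a_1)\in B$, let $\langle X,(a_1,\ldots,a_n)\rangle$ denote the class in the edge-path group $\pi_1(Y(A),\infty)$ of the edge loop $(\infty\cdot X,\ \infty\cdot E(a_1)X,\ \infty\cdot E(a_2)E(a_1)X,\ldots,\ \infty\cdot E(a_n)\cdots E(a_1)X)$; write $\langle X\rangle$ when $n=0$, and $T(p):=E(a_n)\cdots E(a_1)X$ for $p=\langle X,(a_1,\ldots,a_n)\rangle$. Then $\pi_1(Y(A),\infty)$ is generated by these symbols, and the following families form a complete set of defining relations: (1) For $p=\langle X,(a_1,\ldots,a_n)\rangle$ and $q=\langle Y,(b_1,\ldots,b_m)\rangle$: $p\cdot q=\langle X,(a_1,\ldots,a_n,b'_1,\ldots,b'_m)\rangle$, where $Z:=YX^{-1}E(a_1)^{-1}\cdots E(a_n)^{-1}=\begin{pmatrix}u&0\\c&u^{-1}\end{pmatrix}\in B$, $b'_1=u^2b_1+cu$, and $b'_j=u^{2(-1)^{j-1}}b_j$ for $j\ge2$. (2) $\langle X\rangle=1$ for all $X\in B$. (3) $\langle X,(a_1,\ldots,a_{n-1},0)\rangle=\langle X,(a_1,\ldots,a_{n-2})\rangle$ and $\langle X,(a_1,\ldots,a_i,0,a_{i+2},\ldots,a_n)\rangle=\langle X,(a_1,\ldots,a_{i-1},a_i+a_{i+2},a_{i+3},\ldots,a_n)\rangle$. (4) For $u\in A^\times$: $\langle X,(a_1,\ldots,a_{n-1},u)\rangle=\langle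 X,(a_1,\ldots,a_{n-2},a_{n-1}-u^{-1})\rangle$ and $\langle X,(a_1,\ldots,a_i,u,a_{i+2},a_{i+3},a_{i+4},\ldots)\rangle=\langle X,(a_1,\ldots,a_{i-1},a_i-u^{-1},u^2a_{i+2}-u,u^{-2}a_{i+3},u^2a_{i+4},\ldots)\rangle$ (subsequent entries multiplied alternately by $u^{-2}$ and $u^{2}$).
   Context: A unimodular row over $A$ is $(a,b)\in A^2$ with $aA+bA=A$. $\Gamma(A)$ is the graph whose vertices are classes of unimodular rows modulo multiplication by units, with $\{[u],[v]\}$ an edge iff the matrix with rows $u,v$ lies in $\mathrm{GL}_2(A)$; $Y(A)$ is its clique complex. $\mathrm{SL}_2(A)$ acts on vertices on the right by $[u]\cdot M=[uM]$; $\infty=[(1,0)]$. $E(a)=\begin{pmatrix}a&1\\-1&0\end{pmatrix}$. $B$ is the group of lower triangular matrices in $\mathrm{SL}_2(A)$ (the stabilizer of $\infty$). The edge-path group $\pi_1(Y(A),\infty)$ consists of edge loops at $\infty$ (sequences of vertices, consecutive ones adjacent, beginning and ending at $\infty$) modulo the equivalence generated by deleting $x_{i+1},x_{i+2}$ when $x_i=x_{i+2}$ and deleting $x_{i+1}$ when $\{x_i,x_{i+1},x_{i+2}\}$ is a 2-simplex; the product is concatenation. *)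

theory Defs
  imports "HOL-Algebra.Generated_Groups"
begin

text \<open>M2 p q r s stands for the matrix with rows (p, q) and (r, s).\<close>
datatype 'a mat2 = M2 'a 'a 'a 'a

fun mmul :: "'a::comm_ring_1 mat2 \<Rightarrow> 'a mat2 \<Rightarrow> 'a mat2" (infixl "**" 70) where
  "M2 a b c d ** M2 a' b' c' d' =
     M2 (a*a' + b*c') (a*b' + b*d') (c*a' + d*c') (c*b' + d*d')"

definition mone :: "'a::comm_ring_1 mat2" where
  "mone = M2 1 0 0 1"

fun mdet :: "'a::comm_ring_1 mat2 \<Rightarrow> 'a" where
  "mdet (M2 a b c d) = a*d - b*c"

text \<open>Inverse of a matrix of determinant 1 (the adjugate).\<close>
fun sl_inv :: "'a::comm_ring_1 mat2 \<Rightarrow> 'a mat2" where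
  "sl_inv (M2 a b c d) = M2 d (-b) (-c) a"

fun m11 :: "'a mat2 \<Rightarrow> 'a" where "m11 (M2 a b c d) = a"
fun m21 :: "'a mat2 \<Rightarrow> 'a" where "m21 (M2 a b c d) = c"

definition SL2 :: "'a::comm_ring_1 mat2 set" where
  "SL2 = {M. mdet M = 1}"

definition Bgrp :: "'a::comm_ring_1 mat2 set" where
  "Bgrp = {M. M \<in> SL2 \<and> (\<exists>a c d. M = M2 a 0 c d)}"

definition Emat :: "'a::comm_ring_1 \<Rightarrow> 'a mat2" where
  "Emat a = M2 a 1 (-1) 0"

text \<open>Eprod [a1,...,an] = E(an) ... E(a1).\<close>
definition Eprod :: "'a::comm_ring_1 list \<Rightarrow> 'a mat2" where
  "Eprod as = foldl (\<lambda>M a. Emat a ** M) mone as"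

definition uinv :: "'a::comm_ring_1 \<Rightarrow> 'a" where
  "uinv u = (SOME v. u * v = 1)"

definition unimod :: "'a::comm_ring_1 \<times> 'a \<Rightarrow> bool" where
  "unimod r \<longleftrightarrow> (\<exists>x y. fst r * x + snd r * y = 1)"

definition vclass :: "'a::comm_ring_1 \<times> 'a \<Rightarrow> ('a \<times> 'a) set" where
  "vclass r = {(u * fst r, u * snd r) | u. u dvd 1}"

definition vertices :: "('a::comm_ring_1 \<times> 'a) set set" where
  "vertices = {vclass r | r. unimod r}"

definition infv :: "('a::comm_ring_1 \<times> 'a) set" where
  "infv = vclass (1, 0)"

fun rowmul :: "'a::comm_ring_1 \<times> 'a \<Rightarrow> 'a mat2 \<Rightarrow> 'a \<times> 'a" where
  "rowmul (x, y) (M2 a b c d) = (x*a + y*c, x*b + y*d)"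

definition vact :: "('a::comm_ring_1 \<times> 'a) set \<Rightarrow> 'a mat2 \<Rightarrow> ('a \<times> 'a) set" where
  "vact v M = vclass (rowmul (SOME r. r \<in> v) M)"

definition adj :: "('a::comm_ring_1 \<times> 'a) set \<Rightarrow> ('a \<times> 'a) set \<Rightarrow> bool" where
  "adj P Q \<longleftrightarrow> P \<in> vertices \<and> Q \<in> vertices \<and>
     (\<exists>r\<in>P. \<exists>s\<in>Q. mdet (M2 (fst r) (snd r) (fst s) (snd s)) dvd 1)"

definition simplex2 :: "('a::comm_ring_1 \<times> 'a) set \<Rightarrow> ('a \<times> 'a) set \<Rightarrow> ('a \<times> 'a) set \<Rightarrow> bool" where
  "simplex2 a b c \<longleftrightarrow> adj a b \<and> adj b c \<and> adj a c"

definition is_loop :: "('a::comm_ring_1 \<times> 'a) set list \<Rightarrow> bool" where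
  "is_loop xs \<longleftrightarrow> xs \<noteq> [] \<and> hd xs = infv \<and> last xs = infv \<and>
     (\<forall>i. Suc i < length xs \<longrightarrow> adj (xs ! i) (xs ! Suc i))"

definition ep_step :: "('a::comm_ring_1 \<times> 'a) set list \<Rightarrow> ('a \<times> 'a) set list \<Rightarrow> bool" where
  "ep_step xs ys \<longleftrightarrow> (\<exists>l a b c r. xs = l @ [a, b, c] @ r \<and>
     ((a = c \<and> ys = l @ [a] @ r) \<or> (simplex2 a b c \<and> ys = l @ [a, c] @ r)))"

definition loop_eq :: "('a::comm_ring_1 \<times> 'a) set list \<Rightarrow> ('a \<times> 'a) set list \<Rightarrow> bool" where
  "loop_eq = equivclp (\<lambda>xs ys. is_loop xs \<and> is_loop ys \<and> ep_step xs ys)"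

definition loop_class :: "('a::comm_ring_1 \<times> 'a) set list \<Rightarrow> ('a \<times> 'a) set list set" where
  "loop_class xs = {ys. loop_eq xs ys}"

definition pi1 :: "('a::comm_ring_1 \<times> 'a) set list set monoid" where
  "pi1 = \<lparr> carrier = {loop_class xs | xs. is_loop xs},
           mult = (\<lambda>P Q. {zs. \<exists>xs\<in>P. \<exists>ys\<in>Q. loop_eq (xs @ tl ys) zs}),
           one = loop_class [infv] \<rparr>"

definition Syms :: "('a::comm_ring_1 mat2 \<times> 'a list) set" where
  "Syms = {(X, as). X \<in> Bgrp \<and> Eprod as ** X \<in> Bgrp}"

definition Tsym :: "'a::comm_ring_1 mat2 \<times> 'a list \<Rightarrow> 'a mat2" where
  "Tsym p = Eprod (snd p) ** fst p"

definition sym_loop :: "'a::comm_ring_1 mat2 \<times> 'a list \<Rightarrow> ('a \<times> 'a) set list" where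
  "sym_loop p = map (\<lambda>k. vact infv (Eprod (take k (snd p)) ** fst p)) [0..<Suc (length (snd p))]"

definition sym :: "'a::comm_ring_1 mat2 \<times> 'a list \<Rightarrow> ('a \<times> 'a) set list set" where
  "sym p = loop_class (sym_loop p)"

text \<open>b'_1 = u^2 b_1 + c u, b'_j = u^(2(-1)^(j-1)) b_j for j >= 2.\<close>
definition twist :: "'a::comm_ring_1 \<Rightarrow> 'a \<Rightarrow> 'a list \<Rightarrow> 'a list" where
  "twist u c bs = map (\<lambda>(k, b). if k = 0 then u^2 * b + c * u
                               else if odd k then (uinv u)^2 * b else u^2 * b)
                      (zip [0..<length bs] bs)"

definition altmul :: "'a::comm_ring_1 \<Rightarrow> 'a list \<Rightarrow> 'a list" where
  "altmul u cs = map (\<lambda>(k, b). if even k then (uinv u)^2 * b else u^2 * b)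
                     (zip [0..<length cs] cs)"

definition concat_sym :: "'a::comm_ring_1 mat2 \<times> 'a list \<Rightarrow> 'a mat2 \<times> 'a list \<Rightarrow> 'a mat2 \<times> 'a list" where
  "concat_sym p q =
     (let Z = fst q ** sl_inv (Tsym p) in (fst p, snd p @ twist (m11 Z) (m21 Z) (snd q)))"

definition rels :: "('c, 'm) monoid_scheme \<Rightarrow> ('a::comm_ring_1 mat2 \<times> 'a list \<Rightarrow> 'c) \<Rightarrow> bool" where
  "rels G g \<longleftrightarrow>
    (\<forall>p\<in>Syms. \<forall>q\<in>Syms. concat_sym p q \<in> Syms \<longrightarrow>
        g p \<otimes>\<^bsub>G\<^esub> g q = g (concat_sym p q)) \<and>
    (\<forall>X\<in>Bgrp. g (X, []) = \<one>\<^bsub>G\<^esub>) \<and>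
    (\<forall>X as a. (X, as @ [a, 0]) \<in> Syms \<longrightarrow> (X, as) \<in> Syms \<longrightarrow>
        g (X, as @ [a, 0]) = g (X, as)) \<and>
    (\<forall>X as a b cs. (X, as @ [a, 0, b] @ cs) \<in> Syms \<longrightarrow> (X, as @ [a + b] @ cs) \<in> Syms \<longrightarrow>
        g (X, as @ [a, 0, b] @ cs) = g (X, as @ [a + b] @ cs)) \<and>
    (\<forall>X as a u. u dvd 1 \<longrightarrow> (X, as @ [a, u]) \<in> Syms \<longrightarrow> (X, as @ [a - uinv u]) \<in> Syms \<longrightarrow>
        g (X, as @ [a, u]) = g (X, as @ [a - uinv u])) \<and>
    (\<forall>X as a u b cs. u dvd 1 \<longrightarrow> (X, as @ [a, u, b] @ cs) \<in> Syms \<longrightarrow>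
        (X, as @ [a - uinv u, u^2 * b - u] @ altmul u cs) \<in> Syms \<longrightarrow>
        g (X, as @ [a, u, b] @ cs) = g (X, as @ [a - uinv u, u^2 * b - u] @ altmul u cs))"

end

theory Submission
  imports Defs
begin

lemma mmul_assoc: "(A ** B) ** C = A ** (B ** (C::'a::comm_ring_1 mat2))"
  by (cases A; cases B; cases C) (simp add: algebra_simps)

lemma mone_left[simp]: "mone ** A = (A::'a::comm_ring_1 mat2)"
  by (cases A) (simp add: mone_def)
lemma mone_right[simp]: "A ** mone = (A::'a::comm_ring_1 mat2)"
  by (cases A) (simp add: mone_def)

lemma mdet_mul: "mdet (A ** B) = mdet A * mdet (B::'a::comm_ring_1 mat2)"
  by (cases A; cases B) (simp add: algebra_simps)

lemma mdet_E[simp]: "mdet (Emat a) = 1"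
  by (simp add: Emat_def)

lemma foldl_E: "foldl (\<lambda>M a. Emat a ** M) N as = Eprod as ** N"
proof (induction as arbitrary: N)
  case Nil then show ?case by (simp add: Eprod_def)
next
  case (Cons a as)
  have "Eprod (a#as) = foldl (\<lambda>M a. Emat a ** M) (Emat a ** mone) as"
    unfolding Eprod_def by simp
  also have "\<dots> = Eprod as ** (Emat a ** mone)" by (rule Cons)
  finally have 1: "Eprod (a#as) = Eprod as ** (Emat a ** mone)" .
  have "foldl (\<lambda>M a. Emat a ** M) N (a#as) = foldl (\<lambda>M a. Emat a ** M) (Emat a ** N) as" by simp
  also have "\<dots> = Eprod as ** (Emat a ** N)" by (rule Cons)
  finally show ?case unfolding 1 by (simp add: mmul_assoc)
qed

lemma Eprod_Nil[simp]: "Eprod [] = mone" by (simp add: Eprod_def)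
lemma Eprod_Cons: "Eprod (a#as) = Eprod as ** Emat a"
  using foldl_E[of "Emat a ** mone" as] by (simp add: Eprod_def)
lemma Eprod_append: "Eprod (as@bs) = Eprod bs ** Eprod as"
proof -
  have "Eprod (as@bs) = foldl (\<lambda>M a. Emat a ** M) (Eprod as) bs" unfolding Eprod_def by simp
  then show ?thesis by (simp add: foldl_E)
qed
lemma Eprod_snoc: "Eprod (as@[a]) = Emat a ** Eprod as"
  by (simp add: Eprod_append Eprod_Cons)
lemma mdet_Eprod[simp]: "mdet (Eprod as) = 1"
  by (induction as rule: rev_induct) (simp_all add: Eprod_snoc mdet_mul, simp add: mone_def)

fun r1 :: "'a mat2 \<Rightarrow> 'a \<times> 'a" where "r1 (M2 a b c d) = (a, b)"

definition V :: "'a::comm_ring_1 mat2 \<Rightarrow> ('a \<times> 'a) set" where "V M = vclass (r1 M)"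

lemma vclass_mem: "r \<in> vclass r"
  unfolding vclass_def by (cases r) (auto intro!: exI[of _ 1])

lemma vclass_scale: assumes "w dvd 1" shows "vclass (w * fst r, w * snd r) = vclass r"
proof -
  obtain w' where w': "1 = w * w'" using assms by (auto elim: dvdE)
  show ?thesis unfolding vclass_def
  proof (intro equalityI subsetI)
    fix x assume "x \<in> {(u * fst (w * fst r, w * snd r), u * snd (w * fst r, w * snd r)) |u. u dvd 1}"
    then obtain u where u: "u dvd 1" "x = (u * (w * fst r), u * (w * snd r))" by auto
    have "u * w dvd 1" using mult_dvd_mono[OF u(1) assms] by simp
    then show "x \<in> {(u * fst r, u * snd r) |u. u dvd 1}" using u(2)
      by (intro CollectI exI[of _ "u*w"]) (simp add: mult.assoc)
  next
    fix x assume "x \<in> {(u * fst r, u * snd r) |u. u dvd 1}"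
    then obtain u where u: "u dvd 1" "x = (u * fst r, u * snd r)" by auto
    have "w' dvd 1" using w' by (metis dvd_triv_right)
    then have "u * w' dvd 1" using mult_dvd_mono[OF u(1)] by fastforce
    moreover have "u * fst r = (u * w') * (w * fst r)" "u * snd r = (u * w') * (w * snd r)"
      using w' by (metis mult.assoc mult.left_commute mult_1_right)+
    ultimately show "x \<in> {(u * fst (w * fst r, w * snd r), u * snd (w * fst r, w * snd r)) |u. u dvd 1}"
      using u(2) by auto
  qed
qed

lemma vclass_eq_iff: "vclass r = vclass s \<longleftrightarrow> (\<exists>w. w dvd 1 \<and> s = (w * fst r, w * snd r))"
proof
  assume "vclass r = vclass s"
  then have "s \<in> vclass r" using vclass_mem by metis
  then show "\<exists>w. w dvd 1 \<and> s = (w * fst r, w * snd r)" unfolding vclass_def by auto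
next
  assume "\<exists>w. w dvd 1 \<and> s = (w * fst r, w * snd r)"
  then show "vclass r = vclass s" using vclass_scale by metis
qed

lemma vact_infv: "vact infv M = V M"
proof -
  define S where "S = (SOME r. r \<in> (infv::('a\<times>'a) set))"
  have "\<exists>r. r \<in> (infv::('a\<times>'a) set)" unfolding infv_def using vclass_mem by blast
  then have "S \<in> infv" unfolding S_def by (rule someI_ex)
  then have "\<exists>u::'a. u dvd 1 \<and> S = (u * 1, u * 0)" unfolding infv_def vclass_def by auto
  then obtain u :: 'a where u: "u dvd 1" "S = (u, 0)" by auto
  obtain a b c d where M: "M = M2 a b c d" by (cases M)
  have 1: "vact infv M = vclass (u * a, u * b)" unfolding vact_def S_def[symmetric] u(2) M by simp
  have 2: "vclass (u * a, u * b) = vclass (a, b)" using vclass_scale[OF u(1), of "(a,b)"] by simp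
  have 3: "V M = vclass (a, b)" unfolding V_def M by simp
  show ?thesis by (simp only: 1 2 3)
qed


definition rdet :: "'a::comm_ring_1 \<times> 'a \<Rightarrow> 'a \<times> 'a \<Rightarrow> 'a" where
  "rdet r s = fst r * snd s - snd r * fst s"

lemma unit_mult: "(u::'a::comm_ring_1) dvd 1 \<Longrightarrow> w dvd 1 \<Longrightarrow> u * w dvd 1"
  using mult_dvd_mono[of u 1 w 1] by simp

lemma unit_factor: "(u::'a::comm_ring_1) * w dvd 1 \<Longrightarrow> w dvd 1"
  by (meson dvd_mult_right)

lemma vclass_iff: "vclass (x, y) = vclass (x', y') \<longleftrightarrow> (\<exists>w. w dvd 1 \<and> x' = w * x \<and> y' = w * y)"
  using vclass_eq_iff[of "(x,y)" "(x',y')"] by simp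

lemma vclass_member: "s \<in> vclass (x, y) \<longleftrightarrow> (\<exists>u. u dvd 1 \<and> s = (u * x, u * y))"
  unfolding vclass_def by auto

lemma unimod_scale: assumes "w dvd 1" shows "unimod (w * x, w * y) \<longleftrightarrow> unimod (x, y)"
proof
  assume "unimod (w * x, w * y)"
  then obtain a b where "w * x * a + w * y * b = 1" unfolding unimod_def by auto
  then have "x * (w * a) + y * (w * b) = 1" by (simp add: algebra_simps)
  then show "unimod (x, y)" unfolding unimod_def by auto
next
  assume "unimod (x, y)"
  then obtain a b where ab: "x * a + y * b = 1" unfolding unimod_def by auto
  obtain w' where w': "1 = w * w'" using assms by (auto elim: dvdE)
  have "w * x * (w' * a) + w * y * (w' * b) = (w * w') * (x * a + y * b)" by (simp add: algebra_simps)
  also have "\<dots> = 1" using ab w' by simp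
  finally show "unimod (w * x, w * y)" unfolding unimod_def by auto
qed

lemma vclass_vertices: "vclass (x, y) \<in> vertices \<longleftrightarrow> unimod (x, y)"
proof
  assume "vclass (x, y) \<in> vertices"
  then obtain r where r: "unimod r" "vclass r = vclass (x, y)" unfolding vertices_def by auto
  obtain x' y' where [simp]: "r = (x', y')" by (cases r)
  from r obtain w where w: "w dvd 1" "x = w * x'" "y = w * y'" using vclass_iff[of x' y' x y] by auto
  then show "unimod (x, y)" using unimod_scale[OF w(1), of x' y'] r(1) by simp
qed (auto simp: vertices_def)

lemma adj_vclass: "adj (vclass (x, y)) (vclass (x', y')) \<longleftrightarrow>
   unimod (x, y) \<and> unimod (x', y') \<and> rdet (x, y) (x', y') dvd 1"
proof -
  have "(\<exists>r\<in>vclass (x, y). \<exists>s\<in>vclass (x', y'). mdet (M2 (fst r) (snd r) (fst s) (snd s)) dvd 1)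
     \<longleftrightarrow> rdet (x, y) (x', y') dvd 1"
  proof
    assume "\<exists>r\<in>vclass (x, y). \<exists>s\<in>vclass (x', y'). mdet (M2 (fst r) (snd r) (fst s) (snd s)) dvd 1"
    then obtain r s where rs: "r \<in> vclass (x, y)" "s \<in> vclass (x', y')" "mdet (M2 (fst r) (snd r) (fst s) (snd s)) dvd 1"
      by blast
    from rs(1) obtain u where u: "u dvd 1" "r = (u * x, u * y)" unfolding vclass_member by blast
    from rs(2) obtain v where v: "v dvd 1" "s = (v * x', v * y')" unfolding vclass_member by blast
    have uv: "mdet (M2 (u*x) (u*y) (v*x') (v*y')) dvd 1" using rs(3) u v by simp
    have "mdet (M2 (u*x) (u*y) (v*x') (v*y')) = (u * v) * rdet (x, y) (x', y')"
      by (simp add: rdet_def algebra_simps)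
    then show "rdet (x, y) (x', y') dvd 1" using uv unit_factor by metis
  next
    assume "rdet (x, y) (x', y') dvd 1"
    then show "\<exists>r\<in>vclass (x, y). \<exists>s\<in>vclass (x', y'). mdet (M2 (fst r) (snd r) (fst s) (snd s)) dvd 1"
      using vclass_mem[of "(x,y)"] vclass_mem[of "(x',y')"] by (intro bexI) (auto simp: rdet_def)
  qed
  then show ?thesis unfolding adj_def vclass_vertices by blast
qed

lemma adj_sym: assumes "adj P Q" shows "adj Q P"
proof -
  from assms obtain r s where rs: "P \<in> vertices" "Q \<in> vertices" "r \<in> P" "s \<in> Q"
    "mdet (M2 (fst r) (snd r) (fst s) (snd s)) dvd 1" unfolding adj_def by blast
  have "mdet (M2 (fst s) (snd s) (fst r) (snd r)) = - mdet (M2 (fst r) (snd r) (fst s) (snd s))"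
    by simp
  then have "mdet (M2 (fst s) (snd s) (fst r) (snd r)) dvd 1" using rs(5) by (simp only: minus_dvd_iff)
  then show ?thesis unfolding adj_def using rs by blast
qed

lemma r1_mul: "r1 (N ** M) = rowmul (r1 N) M"
  by (cases N; cases M) simp

lemma rowmul_scale: "rowmul (w * x, w * y) M = (w * fst (rowmul (x, y) M), w * snd (rowmul (x,y) M))"
  by (cases M) (simp add: algebra_simps)

lemma rowmul_inv: assumes "mdet M = 1" shows "rowmul (rowmul r M) (sl_inv M) = r"
proof -
  obtain a b c d where M: "M = M2 a b c d" by (cases M)
  obtain x y where r: "r = (x, y)" by (cases r)
  have "rowmul (rowmul r M) (sl_inv M) = (x * (a*d - b*c), y * (a*d - b*c))"
    unfolding M r by (simp add: algebra_simps)
  then show ?thesis using assms M r by simp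
qed

lemma vclass_rowmul: "vclass r = vclass s \<Longrightarrow> vclass (rowmul r M) = vclass (rowmul s M)"
proof -
  assume "vclass r = vclass s"
  then obtain w where w: "w dvd 1" "s = (w * fst r, w * snd r)" using vclass_eq_iff by blast
  have "rowmul s M = (w * fst (rowmul r M), w * snd (rowmul r M))"
    using rowmul_scale[of w "fst r" "snd r" M] w(2) by simp
  then show ?thesis using vclass_eq_iff w(1) by blast
qed

lemma vclass_rowmul_iff: "mdet M = 1 \<Longrightarrow> vclass (rowmul r M) = vclass (rowmul s M) \<longleftrightarrow> vclass r = vclass s"
  using vclass_rowmul[of "rowmul r M" "rowmul s M" "sl_inv M"] rowmul_inv[of M] vclass_rowmul by metis

lemma rdet_rowmul: "rdet (rowmul r M) (rowmul s M) = rdet r s * mdet M"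
  by (cases M; cases r; cases s) (simp add: rdet_def algebra_simps)

lemma unimod_rdet: "unimod r \<longleftrightarrow> (\<exists>s. rdet r s = 1)"
proof
  assume "unimod r" then obtain x y where "fst r * x + snd r * y = 1" unfolding unimod_def by auto
  then have "rdet r (-y, x) = 1" by (simp add: rdet_def algebra_simps)
  then show "\<exists>s. rdet r s = 1" by blast
next
  assume "\<exists>s. rdet r s = 1" then obtain s where "rdet r s = 1" by blast
  then have "fst r * snd s + snd r * (- fst s) = 1" by (simp add: rdet_def algebra_simps)
  then show "unimod r" unfolding unimod_def by blast
qed

lemma unimod_rowmul: "mdet M = 1 \<Longrightarrow> unimod (rowmul r M) \<longleftrightarrow> unimod r"
  unfolding unimod_rdet by (metis mult_1_right rdet_rowmul rowmul_inv)

lemma adj_rowmul: assumes "mdet M = 1"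
  shows "adj (vclass (rowmul r M)) (vclass (rowmul s M)) \<longleftrightarrow> adj (vclass r) (vclass s)"
  using adj_vclass[of "fst (rowmul r M)" "snd (rowmul r M)" "fst (rowmul s M)" "snd (rowmul s M)"]
    adj_vclass[of "fst r" "snd r" "fst s" "snd s"] unimod_rowmul[OF assms] rdet_rowmul[of r M s] assms
  by simp

lemma V_mul_iff: "mdet M = 1 \<Longrightarrow> V (N ** M) = V (N' ** M) \<longleftrightarrow> V N = V N'"
  unfolding V_def r1_mul by (rule vclass_rowmul_iff)

lemma adj_V_mul: "mdet M = 1 \<Longrightarrow> adj (V (N ** M)) (V (N' ** M)) \<longleftrightarrow> adj (V N) (V N')"
  unfolding V_def r1_mul by (rule adj_rowmul)

lemma V_lower: assumes "l dvd 1" shows "V (M2 l 0 m n ** M) = V M"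
  unfolding V_def using vclass_scale[OF assms, of "r1 M"] by (cases M) (simp add: algebra_simps)

lemma SL2_mdet: "M \<in> SL2 \<longleftrightarrow> mdet M = 1" by (simp add: SL2_def)

lemma mdet_unit_entries: "mdet (M2 a 0 c d) = 1 \<Longrightarrow> a dvd 1"
  by (simp, metis dvd_triv_left)

lemma V_infv: assumes "mdet M = 1" shows "V M = infv \<longleftrightarrow> M \<in> Bgrp"
proof -
  obtain a b c d where M: "M = M2 a b c d" by (cases M)
  have "V M = infv \<longleftrightarrow> vclass (1, 0) = vclass (a, b)"
    unfolding M V_def infv_def by auto
  also have "\<dots> \<longleftrightarrow> (\<exists>w. w dvd 1 \<and> a = w * 1 \<and> b = w * 0)"
    by (rule vclass_iff)
  also have "\<dots> \<longleftrightarrow> b = 0"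
  proof
    assume "b = 0" then have "a dvd 1" using assms M mdet_unit_entries by metis
    then show "\<exists>w. w dvd 1 \<and> a = w * 1 \<and> b = w * 0" using \<open>b = 0\<close> by auto
  qed auto
  finally show ?thesis using assms unfolding Bgrp_def SL2_def M by auto
qed

lemma V_vertex: "mdet M = 1 \<Longrightarrow> V M \<in> vertices"
  unfolding V_def by (cases M) (simp add: vclass_vertices unimod_def, metis diff_conv_add_uminus mult.commute mult_minus_right)

lemma unimod_10: "unimod (1, 0)" unfolding unimod_def by (intro exI[of _ 1]) simp
lemma unimod_a1: "unimod (a, 1)" unfolding unimod_def by (intro exI[of _ 0] exI[of _ 1]) simp

lemma V_mone: "V mone = vclass (1, 0)" by (simp add: V_def mone_def)
lemma V_Emat: "V (Emat a) = vclass (a, 1)" by (simp add: V_def Emat_def)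

lemma adj_E: assumes "mdet M = 1" shows "adj (V M) (V (Emat a ** M))"
proof -
  have 1: "adj (V (mone ** M)) (V (Emat a ** M)) \<longleftrightarrow> adj (V mone) (V (Emat a))" using adj_V_mul[OF assms] .
  have "rdet (1, 0) (a, 1) = 1" by (simp add: rdet_def)
  then have "adj (V mone) (V (Emat a))"
    unfolding V_mone V_Emat adj_vclass using unimod_10 unimod_a1 by (metis dvd_refl)
  then show ?thesis using 1 by simp
qed


fun loopv :: "'a::comm_ring_1 mat2 \<Rightarrow> 'a list \<Rightarrow> ('a \<times> 'a) set list" where
  "loopv M [] = [V M]"
| "loopv M (a # as) = V M # loopv (Emat a ** M) as"

lemma sym_loop_map: "map (\<lambda>k. vact infv (Eprod (take k as) ** X)) [0..<Suc (length as)] = loopv X as"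
proof (induction as arbitrary: X)
  case Nil then show ?case by (simp add: vact_infv)
next
  case (Cons a as)
  have u: "[0..<Suc (length (a#as))] = 0 # map Suc [0..<Suc (length as)]"
    by (subst upt_conv_Cons) (simp, simp only: map_Suc_upt length_Cons)
  have "map (\<lambda>k. vact infv (Eprod (take k (a#as)) ** X)) (map Suc [0..<Suc (length as)])
      = map (\<lambda>k. vact infv (Eprod (take k as) ** (Emat a ** X))) [0..<Suc (length as)]"
    by (simp add: Eprod_Cons mmul_assoc)
  also have "\<dots> = loopv (Emat a ** X) as" by (rule Cons)
  finally show ?case unfolding u by (simp add: vact_infv)
qed

lemma sym_loop_loopv: "sym_loop (X, as) = loopv X as"
  unfolding sym_loop_def using sym_loop_map by simp

lemma loopv_length[simp]: "length (loopv M as) = Suc (length as)"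
  by (induction as arbitrary: M) auto

lemma loopv_ne[simp]: "loopv M as \<noteq> []"
  by (cases as) auto

lemma loopv_hd[simp]: "hd (loopv M as) = V M"
  by (cases as) auto

lemma loopv_last: "last (loopv M as) = V (Eprod as ** M)"
  by (induction as arbitrary: M) (auto simp: Eprod_Cons mmul_assoc)

lemma loopv_append: "loopv M (as @ bs) = butlast (loopv M as) @ loopv (Eprod as ** M) bs"
  by (induction as arbitrary: M) (auto simp: Eprod_Cons mmul_assoc)

lemma loopv_Cons2: "loopv M (x # y # cs) = V M # V (Emat x ** M) # loopv (Emat y ** Emat x ** M) cs"
  by (simp add: mmul_assoc)

lemma mdet_E_mul: "mdet M = 1 \<Longrightarrow> mdet (Emat a ** M) = 1"
  by (simp add: mdet_mul)

lemma walk_loopv: "mdet M = 1 \<Longrightarrow> successively adj (loopv M as)"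
proof (induction as arbitrary: M)
  case Nil then show ?case by simp
next
  case (Cons a as)
  have "adj (V M) (V (Emat a ** M))" using adj_E Cons.prems by blast
  moreover have "successively adj (loopv (Emat a ** M) as)" using Cons mdet_E_mul by blast
  ultimately show ?case by (simp add: successively_Cons)
qed

lemma is_loop_alt: "is_loop xs \<longleftrightarrow> xs \<noteq> [] \<and> hd xs = infv \<and> last xs = infv \<and> successively adj xs"
  unfolding is_loop_def successively_conv_nth by blast

lemma Bgrp_mdet: "X \<in> Bgrp \<Longrightarrow> mdet X = 1"
  by (simp add: Bgrp_def SL2_def)

lemma Syms_loopv: "(X, as) \<in> Syms \<longleftrightarrow> mdet X = 1 \<and> hd (loopv X as) = infv \<and> last (loopv X as) = infv"
proof -
  have "mdet X = 1 \<Longrightarrow> mdet (Eprod as ** X) = 1" by (simp add: mdet_mul)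
  then show ?thesis unfolding Syms_def loopv_last loopv_hd
    using V_infv Bgrp_mdet by (auto simp: mdet_mul)
qed

lemma Syms_is_loop: "(X, as) \<in> Syms \<Longrightarrow> is_loop (loopv X as)"
  unfolding is_loop_alt using Syms_loopv walk_loopv by auto

lemma r1_E: "r1 (Emat a) = (a, 1)" by (simp add: Emat_def)

lemma loopv_inj: "mdet X = 1 \<Longrightarrow> loopv X as = loopv X bs \<Longrightarrow> as = bs"
proof (induction as arbitrary: bs X)
  case Nil then show ?case by (cases bs) (auto dest: sym)
next
  case (Cons a as)
  then obtain b bs' where bs: "bs = b # bs'" by (cases bs) auto
  from Cons.prems have eq2: "loopv (Emat a ** X) as = loopv (Emat b ** X) bs'"
    unfolding bs by auto
  have "hd (loopv (Emat a ** X) as) = hd (loopv (Emat b ** X) bs')" using eq2 by (rule arg_cong)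
  then have eq1: "V (Emat a ** X) = V (Emat b ** X)" by (simp only: loopv_hd)
  note eq = eq1 eq2
  have "V (Emat a) = V (Emat b)" using eq(1) V_mul_iff[OF Cons.prems(1), of "Emat a" "Emat b"] by simp
  then obtain w where "w dvd 1" "b = w * a" "1 = w * 1" unfolding V_Emat vclass_iff by blast
  then have ab: "a = b" by simp
  then have "as = bs'" using Cons.IH[of "Emat a ** X" bs'] eq(2) mdet_E_mul Cons.prems(1) by auto
  then show ?case using ab bs by simp
qed

lemma sl_inv_inv: "sl_inv (sl_inv M) = M" by (cases M) simp
lemma mdet_sl_inv: "mdet (sl_inv M) = mdet M" by (cases M) (simp add: algebra_simps)

lemma r1_as_rowmul: "r1 M = rowmul (1, 0) M" by (cases M) simp

lemma adj_V_E: assumes M: "mdet M = 1" and a: "adj (V M) Q" shows "\<exists>a. Q = V (Emat a ** M)"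
proof -
  from a obtain s where s: "Q = vclass s" unfolding adj_def vertices_def by auto
  define s' where "s' = rowmul s (sl_inv M)"
  have ss: "s = rowmul s' M" unfolding s'_def
    using rowmul_inv[of "sl_inv M" s] M by (simp add: mdet_sl_inv sl_inv_inv)
  have "adj (vclass (rowmul (1,0) M)) (vclass (rowmul s' M))" using a unfolding s ss V_def r1_as_rowmul .
  then have "adj (vclass (1,0)) (vclass s')" using adj_rowmul M by blast
  then have "rdet (1,0) s' dvd 1" using adj_vclass[of 1 0 "fst s'" "snd s'"] by simp
  then have u: "snd s' dvd 1" by (simp add: rdet_def)
  then obtain t where t: "1 = snd s' * t" by (auto elim: dvdE)
  have tu: "t dvd 1" using t by (metis dvd_triv_right)
  have "vclass s' = vclass (t * fst s', t * snd s')" using vclass_scale[OF tu, of s'] by simp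
  also have "\<dots> = vclass (t * fst s', 1)" using t by (simp add: mult.commute)
  finally have "Q = vclass (rowmul (t * fst s', 1) M)"
    unfolding s ss using vclass_rowmul by blast
  then have "Q = V (Emat (t * fst s') ** M)" unfolding V_def r1_mul r1_E .
  then show ?thesis by blast
qed

lemma walk_is_loopv: "mdet M = 1 \<Longrightarrow> successively adj (V M # ys) \<Longrightarrow> \<exists>as. loopv M as = V M # ys"
proof (induction ys arbitrary: M)
  case Nil then show ?case by (intro exI[of _ "[]"]) simp
next
  case (Cons y ys)
  then have "adj (V M) y" "successively adj (y # ys)" by (auto simp: successively_Cons)
  then obtain a where a: "y = V (Emat a ** M)" using adj_V_E Cons.prems(1) by blast
  then obtain as where "loopv (Emat a ** M) as = y # ys"
    using Cons.IH[of "Emat a ** M"] Cons.prems(1) mdet_E_mul \<open>successively adj (y # ys)\<close> by blast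
  then have "loopv M (a # as) = V M # y # ys" by simp
  then show ?case by blast
qed

lemma mone_Bgrp: "mone \<in> Bgrp" by (simp add: Bgrp_def SL2_def mone_def)
lemma mdet_mone[simp]: "mdet mone = 1" by (simp add: mone_def)

lemma loop_surj: assumes "is_loop xs" shows "\<exists>as. (mone, as) \<in> Syms \<and> loopv mone as = xs"
proof -
  have V1: "V mone = infv" by (simp add: V_mone infv_def)
  from assms have xs: "xs \<noteq> []" "hd xs = infv" "last xs = infv" "successively adj xs"
    unfolding is_loop_alt by auto
  then obtain ys where "xs = V mone # ys" using V1 by (cases xs) auto
  then obtain as where as: "loopv mone as = xs" using walk_is_loopv[of mone ys] xs(4) by auto
  then have "hd (loopv mone as) = infv" "last (loopv mone as) = infv" using xs by auto
  then have "(mone, as) \<in> Syms" using Syms_loopv[of mone as] by simp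
  then show ?thesis using as by blast
qed

lemma EE: "Emat y ** Emat x = M2 (y * x - 1) y (- x) (-1)" by (simp add: Emat_def)

lemma V_EE_eq: assumes M: "mdet M = 1" and e: "V M = V (Emat y ** Emat x ** M)" shows "y = 0"
proof -
  have "V (mone ** M) = V ((Emat y ** Emat x) ** M)" using e by (simp add: mmul_assoc)
  then have "V mone = V (Emat y ** Emat x)" using V_mul_iff M by blast
  then have "vclass (1, 0) = vclass (y * x - 1, y)" by (simp add: V_def EE mone_def)
  then obtain w where "y = w * 0" unfolding vclass_iff by blast
  then show ?thesis by simp
qed

lemma adj_EE: assumes M: "mdet M = 1" and e: "adj (V M) (V (Emat y ** Emat x ** M))" shows "y dvd 1"
proof -
  have "adj (V (mone ** M)) (V ((Emat y ** Emat x) ** M))" using e by (simp add: mmul_assoc)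
  then have "adj (V mone) (V (Emat y ** Emat x))" using adj_V_mul M by blast
  then have "adj (vclass (1, 0)) (vclass (y * x - 1, y))" by (simp add: V_def EE mone_def)
  then have "rdet (1, 0) (y * x - 1, y) dvd 1" unfolding adj_vclass by blast
  then show ?thesis by (simp add: rdet_def)
qed


lemma uinv_r: assumes "(u::'a::comm_ring_1) dvd 1" shows "u * uinv u = 1"
proof -
  from assms obtain v where "1 = u * v" by (auto elim: dvdE)
  then have "\<exists>v. u * v = 1" by metis
  then show ?thesis unfolding uinv_def by (rule someI_ex)
qed

lemma uinv_l: "(u::'a::comm_ring_1) dvd 1 \<Longrightarrow> uinv u * u = 1"
  using uinv_r by (simp add: mult.commute)

lemma uinv_unit: "(u::'a::comm_ring_1) dvd 1 \<Longrightarrow> uinv u dvd 1"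
  using uinv_l by (metis dvd_triv_left)

lemma inv_unique: "(a::'a::comm_ring_1) * b = 1 \<Longrightarrow> a * c = 1 \<Longrightarrow> b = c"
  by (metis mult.assoc mult.commute mult_1_right)

lemma uinv_eq: "(u::'a::comm_ring_1) * v = 1 \<Longrightarrow> uinv u = v"
  using inv_unique uinv_r by (metis dvd_triv_left)

lemma uinv_uinv: "(u::'a::comm_ring_1) dvd 1 \<Longrightarrow> uinv (uinv u) = u"
  using uinv_eq uinv_l by blast

fun altr :: "'a::comm_ring_1 \<Rightarrow> 'a list \<Rightarrow> 'a list" where
  "altr u [] = []"
| "altr u (c # cs) = (uinv u)^2 * c # altr (uinv u) cs"

lemma altr_length[simp]: "length (altr u cs) = length cs"
  by (induction cs arbitrary: u) auto

lemma altr_nth: "u dvd 1 \<Longrightarrow> k < length cs \<Longrightarrow>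
   altr u cs ! k = (if even k then (uinv u)^2 * cs ! k else u^2 * cs ! k)"
proof (induction cs arbitrary: u k)
  case Nil then show ?case by simp
next
  case (Cons c cs)
  show ?case
  proof (cases k)
    case 0 then show ?thesis by simp
  next
    case (Suc j)
    have "altr u (c # cs) ! k = altr (uinv u) cs ! j" using Suc by simp
    also have "\<dots> = (if even j then (uinv (uinv u))^2 * cs ! j else (uinv u)^2 * cs ! j)"
      using Cons.IH[of "uinv u" j, OF uinv_unit[OF Cons.prems(1)]] Cons.prems Suc by simp
    finally show ?thesis using Suc uinv_uinv[OF Cons.prems(1)] by simp
  qed
qed

lemma altmul_altr: assumes "u dvd 1" shows "altmul u cs = altr u cs"
proof (rule nth_equalityI)
  show "length (altmul u cs) = length (altr u cs)" by (simp add: altmul_def)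
  fix k assume "k < length (altmul u cs)"
  then have k: "k < length cs" by (simp add: altmul_def)
  then show "altmul u cs ! k = altr u cs ! k"
    using altr_nth[OF assms k] by (simp add: altmul_def)
qed

lemma altmul_Cons: assumes "u dvd 1" shows "altmul u (c # cs) = (uinv u)^2 * c # altmul (uinv u) cs"
  using altmul_altr[OF assms] altmul_altr[OF uinv_unit[OF assms]] by simp

lemma twist_Nil[simp]: "twist u c [] = []" by (simp add: twist_def)

lemma twist_Cons: "twist u c (b # bs) = (u^2 * b + c * u) # altmul u bs"
proof (rule nth_equalityI)
  show "length (twist u c (b # bs)) = length ((u^2 * b + c * u) # altmul u bs)"
    by (simp add: twist_def altmul_def)
  fix k assume "k < length (twist u c (b # bs))"
  then have k: "k < Suc (length bs)" by (simp add: twist_def)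
  show "twist u c (b # bs) ! k = ((u^2 * b + c * u) # altmul u bs) ! k"
  proof (cases k)
    case 0 then show ?thesis by (simp add: twist_def del: upt_Suc)
  next
    case (Suc j)
    then have j: "j < length bs" using k by simp
    have "twist u c (b # bs) ! k = (if odd (Suc j) then (uinv u)^2 * bs ! j else u^2 * bs ! j)"
      using k Suc by (simp add: twist_def nth_Cons' del: upt_Suc)
    then show ?thesis using Suc j by (simp add: altmul_def)
  qed
qed

lemma loopv_scalar: "l dvd 1 \<Longrightarrow> loopv (M2 l 0 0 l ** N) cs = loopv N cs"
proof (induction cs arbitrary: N)
  case Nil then show ?case using V_lower[OF Nil.prems] by simp
next
  case (Cons c cs)
  have "Emat c ** (M2 l 0 0 l ** N) = M2 l 0 0 l ** (Emat c ** N)"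
    by (cases N) (simp add: Emat_def algebra_simps)
  then show ?case using Cons.IH[OF Cons.prems] V_lower[OF Cons.prems] by simp
qed

lemma loopv_alt: "u dvd 1 \<Longrightarrow> loopv (M2 (uinv u) 0 0 u ** M) cs = loopv M (altmul u cs)"
proof (induction cs arbitrary: u M)
  case Nil then show ?case using V_lower[OF uinv_unit[OF Nil.prems]] by (simp add: altmul_def)
next
  case (Cons c cs)
  have u1: "u * uinv u = 1" using uinv_r Cons.prems by blast
  have "Emat c ** M2 (uinv u) 0 0 u = M2 (uinv (uinv u)) 0 0 (uinv u) ** Emat ((uinv u)^2 * c)"
  proof -
    have "uinv (uinv u) * ((uinv u)^2 * c) = (u * uinv u) * (uinv u * c)"
      using uinv_uinv[OF Cons.prems] by (simp add: power2_eq_square algebra_simps)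
    then have "uinv (uinv u) * ((uinv u)^2 * c) = c * uinv u" using u1 by (simp add: mult.commute)
    then show ?thesis by (simp add: Emat_def uinv_uinv[OF Cons.prems])
  qed
  then have "Emat c ** (M2 (uinv u) 0 0 u ** M) = M2 (uinv (uinv u)) 0 0 (uinv u) ** (Emat ((uinv u)^2 * c) ** M)"
    by (simp add: mmul_assoc[symmetric])
  then have "loopv (Emat c ** (M2 (uinv u) 0 0 u ** M)) cs = loopv (Emat ((uinv u)^2 * c) ** M) (altmul (uinv u) cs)"
    using Cons.IH[of "uinv u"] uinv_unit[OF Cons.prems] by simp
  moreover have "V (M2 (uinv u) 0 0 u ** M) = V M" using V_lower uinv_unit[OF Cons.prems] by blast
  ultimately show ?case using altmul_Cons[OF Cons.prems] by simp
qed

lemma loopv_twist: assumes "d * d' = 1"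
  shows "loopv (M2 d 0 e d' ** M) bs = loopv M (twist d e bs)"
proof (cases bs)
  case Nil
  have "d dvd 1" using assms by (metis dvd_triv_left)
  then show ?thesis using Nil V_lower by simp
next
  case (Cons b cs)
  have du: "d dvd 1" using assms by (metis dvd_triv_left)
  have ud: "uinv d = d'" using uinv_eq assms by blast
  have "Emat b ** M2 d 0 e d' = M2 (uinv d) 0 0 d ** Emat (d^2 * b + e * d)"
  proof -
    have "d' * (d^2 * b + e * d) = (d * d') * (d * b) + (d * d') * e" by (simp add: power2_eq_square algebra_simps)
    then have "d' * (d^2 * b + e * d) = b * d + e" using assms by (simp add: mult.commute)
    then show ?thesis by (simp add: Emat_def ud)
  qed
  then have "Emat b ** (M2 d 0 e d' ** M) = M2 (uinv d) 0 0 d ** (Emat (d^2 * b + e * d) ** M)"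
    by (simp add: mmul_assoc[symmetric])
  then have "loopv (Emat b ** (M2 d 0 e d' ** M)) cs = loopv (Emat (d^2 * b + e * d) ** M) (altmul d cs)"
    using loopv_alt[OF du] by simp
  moreover have "V (M2 d 0 e d' ** M) = V M" using V_lower du by blast
  ultimately show ?thesis using Cons twist_Cons[of d e b cs] by (simp add: mult.commute)
qed

lemma E0E: "Emat 0 ** Emat x = M2 (-1) 0 (-x) (-1)" by (simp add: Emat_def)

lemma step3a: "loopv M [x, 0] = [V M, V (Emat x ** M), V M]"
proof -
  have "V (Emat 0 ** (Emat x ** M)) = V M"
    using V_lower[of "-1" "-x" "-1" M] by (simp add: mmul_assoc[symmetric] E0E)
  then show ?thesis by simp
qed

lemma step3b: "loopv M (x # 0 # z # cs) = V M # V (Emat x ** M) # V M # loopv (Emat (x + z) ** M) cs"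
proof -
  have "V (Emat 0 ** (Emat x ** M)) = V M"
    using V_lower[of "-1" "-x" "-1" M] by (simp add: mmul_assoc[symmetric] E0E)
  moreover have "Emat z ** (Emat 0 ** (Emat x ** M)) = M2 (-1) 0 0 (-1) ** (Emat (x + z) ** M)"
  proof -
    have "Emat z ** Emat 0 ** Emat x = M2 (-1) 0 0 (-1) ** Emat (x + z)"
      by (simp add: Emat_def algebra_simps)
    then show ?thesis by (metis mmul_assoc)
  qed
  moreover have "loopv (M2 (-1) 0 0 (-1) ** (Emat (x + z) ** M)) cs = loopv (Emat (x + z) ** M) cs"
    using loopv_scalar[of "-1"] by simp
  ultimately show ?thesis by simp
qed

lemma EyEx: assumes "y dvd 1" shows "Emat y ** Emat x = M2 y 0 (-1) (uinv y) ** Emat (x - uinv y)"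
  using uinv_r[OF assms] by (simp add: Emat_def algebra_simps)

lemma step4a: assumes "y dvd 1" shows "loopv M [x, y] = [V M, V (Emat x ** M), V (Emat (x - uinv y) ** M)]"
proof -
  have "V (Emat y ** (Emat x ** M)) = V (M2 y 0 (-1) (uinv y) ** (Emat (x - uinv y) ** M))"
    using EyEx[OF assms, of x] by (simp add: mmul_assoc[symmetric])
  also have "\<dots> = V (Emat (x - uinv y) ** M)" using V_lower assms by blast
  finally show ?thesis by simp
qed

lemma step4b: assumes "y dvd 1"
  shows "loopv M (x # y # z # cs) = V M # V (Emat x ** M) # V (Emat (x - uinv y) ** M) #
     loopv (Emat (y^2 * z - y) ** (Emat (x - uinv y) ** M)) (altmul y cs)"
proof -
  have "V (Emat y ** (Emat x ** M)) = V (M2 y 0 (-1) (uinv y) ** (Emat (x - uinv y) ** M))"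
    using EyEx[OF assms, of x] by (simp add: mmul_assoc[symmetric])
  also have "\<dots> = V (Emat (x - uinv y) ** M)" using V_lower assms by blast
  finally have 1: "V (Emat y ** (Emat x ** M)) = V (Emat (x - uinv y) ** M)" .
  have 2: "Emat z ** M2 y 0 (-1) (uinv y) = M2 (uinv y) 0 0 y ** Emat (y^2 * z - y)"
  proof -
    have "uinv y * (y^2 * z - y) = (y * uinv y) * (y * z) - y * uinv y" by (simp add: power2_eq_square algebra_simps)
    then have "uinv y * (y^2 * z - y) = z * y - 1" using uinv_r[OF assms] by (simp add: mult.commute)
    then show ?thesis by (simp add: Emat_def)
  qed
  have "Emat z ** (Emat y ** (Emat x ** M)) = M2 (uinv y) 0 0 y ** (Emat (y^2 * z - y) ** (Emat (x - uinv y) ** M))"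
    using EyEx[OF assms, of x] 2 by (simp add: mmul_assoc[symmetric])
  then have "loopv (Emat z ** (Emat y ** (Emat x ** M))) cs = loopv (Emat (y^2 * z - y) ** (Emat (x - uinv y) ** M)) (altmul y cs)"
    using loopv_alt[OF assms] by simp
  then show ?thesis using 1 by simp
qed


lemma loop_eq_refl: "loop_eq xs xs" unfolding loop_eq_def by simp
lemma loop_eq_sym: "loop_eq xs ys \<Longrightarrow> loop_eq ys xs" unfolding loop_eq_def by (rule equivclp_sym)
lemma loop_eq_trans: "loop_eq xs ys \<Longrightarrow> loop_eq ys zs \<Longrightarrow> loop_eq xs zs"
  unfolding loop_eq_def by (rule equivclp_trans)
lemma loop_eq_step: "is_loop xs \<Longrightarrow> is_loop ys \<Longrightarrow> ep_step xs ys \<Longrightarrow> loop_eq xs ys"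
  unfolding loop_eq_def by (rule r_into_equivclp) simp

lemma loop_class_eq_iff: "loop_class xs = loop_class ys \<longleftrightarrow> loop_eq xs ys"
proof
  assume "loop_class xs = loop_class ys"
  then have "ys \<in> loop_class xs" using loop_eq_refl unfolding loop_class_def by blast
  then show "loop_eq xs ys" unfolding loop_class_def by simp
next
  assume "loop_eq xs ys"
  then show "loop_class xs = loop_class ys" unfolding loop_class_def
    using loop_eq_sym loop_eq_trans by blast
qed

lemma loop_class_mem: "xs \<in> loop_class xs" unfolding loop_class_def using loop_eq_refl by simp

lemma loop_eq_loop: "loop_eq xs ys \<Longrightarrow> is_loop xs \<Longrightarrow> is_loop ys"
  unfolding loop_eq_def by (induction rule: equivclp_induct) auto

lemma ep_step_lift: "ep_step xs ys \<Longrightarrow> ep_step (pre @ xs @ post) (pre @ ys @ post)"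
proof -
  assume "ep_step xs ys"
  then obtain l a b c r where "xs = l @ [a, b, c] @ r"
    "(a = c \<and> ys = l @ [a] @ r) \<or> (simplex2 a b c \<and> ys = l @ [a, c] @ r)"
    unfolding ep_step_def by blast
  then show ?thesis unfolding ep_step_def
    by (intro exI[of _ "pre @ l"] exI[of _ a] exI[of _ b] exI[of _ c] exI[of _ "r @ post"]) auto
qed

lemma succ_join: "successively P xs \<Longrightarrow> successively P (y # zs) \<Longrightarrow> last xs = y \<Longrightarrow> xs \<noteq> []
  \<Longrightarrow> successively P (xs @ zs)"
  by (auto simp: successively_append_iff successively_Cons)

lemma cat_loop: assumes "is_loop xs" "is_loop ys" shows "is_loop (xs @ tl ys)"
proof -
  from assms(2) have ys: "ys = infv # tl ys" "successively adj (infv # tl ys)"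
    unfolding is_loop_alt by (metis list.collapse)+
  have s: "successively adj (xs @ tl ys)" using succ_join[OF _ ys(2)] assms(1) unfolding is_loop_alt by blast
  have "last (xs @ tl ys) = infv"
  proof (cases "tl ys = []")
    case True then show ?thesis using assms(1) unfolding is_loop_alt by simp
  next
    case False
    then have "last (tl ys) = last ys" by (metis last_tl)
    then show ?thesis using False assms(2) unfolding is_loop_alt by simp
  qed
  then show ?thesis using s assms(1) unfolding is_loop_alt by simp
qed

lemma cat_eq: assumes "is_loop xs" "is_loop ys" shows "xs @ tl ys = butlast xs @ ys"
proof -
  have "xs = butlast xs @ [infv]" using assms(1) unfolding is_loop_alt by (metis append_butlast_last_id)
  moreover have "ys = infv # tl ys" using assms(2) unfolding is_loop_alt by (metis list.collapse)
  ultimately show ?thesis by (metis append.assoc append_Cons append_Nil)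
qed

lemma loop_eq_cong_left: assumes "loop_eq xs xs'" "is_loop xs" "is_loop zs"
  shows "loop_eq (xs @ tl zs) (xs' @ tl zs)"
  using assms(1,2) unfolding loop_eq_def
proof (induction rule: equivclp_induct)
  case base then show ?case by simp
next
  case (step y z)
  have y: "is_loop y" "is_loop z" using step(2) by auto
  have "ep_step y z \<or> ep_step z y" using step(2) by auto
  then have "ep_step (y @ tl zs) (z @ tl zs) \<or> ep_step (z @ tl zs) (y @ tl zs)"
    using ep_step_lift[of _ _ "[]" "tl zs"] by auto
  then have "loop_eq (y @ tl zs) (z @ tl zs)"
    using loop_eq_step cat_loop y assms(3) loop_eq_sym by metis
  then show ?case using step(3,4) unfolding loop_eq_def by (meson equivclp_trans)
qed

lemma loop_eq_cong_right: assumes "loop_eq ys ys'" "is_loop ys" "is_loop xs"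
  shows "loop_eq (xs @ tl ys) (xs @ tl ys')"
  using assms(1,2) unfolding loop_eq_def
proof (induction rule: equivclp_induct)
  case base then show ?case by simp
next
  case (step y z)
  have y: "is_loop y" "is_loop z" using step(2) by auto
  have "ep_step y z \<or> ep_step z y" using step(2) by auto
  then have "ep_step (butlast xs @ y) (butlast xs @ z) \<or> ep_step (butlast xs @ z) (butlast xs @ y)"
    using ep_step_lift[of _ _ "butlast xs" "[]"] by auto
  then have "ep_step (xs @ tl y) (xs @ tl z) \<or> ep_step (xs @ tl z) (xs @ tl y)"
    using cat_eq[OF assms(3) y(1)] cat_eq[OF assms(3) y(2)] by simp
  then have "loop_eq (xs @ tl y) (xs @ tl z)"
    using loop_eq_step cat_loop y assms(3) loop_eq_sym by metis
  then show ?case using step(3,4) unfolding loop_eq_def by (meson equivclp_trans)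
qed

lemma pi1_mult: assumes "is_loop xs" "is_loop ys"
  shows "loop_class xs \<otimes>\<^bsub>pi1\<^esub> loop_class ys = loop_class (xs @ tl ys)"
proof (intro equalityI subsetI)
  fix zs assume "zs \<in> loop_class xs \<otimes>\<^bsub>pi1\<^esub> loop_class ys"
  then obtain xs' ys' where h: "loop_eq xs xs'" "loop_eq ys ys'" "loop_eq (xs' @ tl ys') zs"
    unfolding pi1_def loop_class_def by auto
  have l: "is_loop xs'" "is_loop ys'" using h loop_eq_loop assms by blast+
  have "loop_eq (xs @ tl ys) (xs' @ tl ys)" using loop_eq_cong_left h(1) assms by blast
  moreover have "loop_eq (xs' @ tl ys) (xs' @ tl ys')" using loop_eq_cong_right h(2) assms l by blast
  ultimately show "zs \<in> loop_class (xs @ tl ys)" using h(3) loop_eq_trans unfolding loop_class_def by blast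
next
  fix zs assume "zs \<in> loop_class (xs @ tl ys)"
  then show "zs \<in> loop_class xs \<otimes>\<^bsub>pi1\<^esub> loop_class ys"
    unfolding pi1_def loop_class_def using loop_eq_refl by auto
qed

lemma pi1_carrier: "carrier pi1 = {loop_class xs | xs. is_loop xs}" by (simp add: pi1_def)
lemma pi1_one: "\<one>\<^bsub>pi1\<^esub> = loop_class [infv]" by (simp add: pi1_def)

lemma is_loop_one: "is_loop [infv]" unfolding is_loop_alt by simp

lemma succ_rev_adj: assumes "successively adj w" shows "successively adj (rev w)"
proof -
  have "successively (\<lambda>x y. adj y x) w" by (rule successively_mono[OF assms]) (rule adj_sym)
  then show ?thesis by simp
qed

lemma pal_loop: assumes "successively adj w" "w \<noteq> []" "hd w = infv" shows "is_loop (w @ tl (rev w))"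
proof -
  have r: "successively adj (rev w)" using succ_rev_adj assms(1) by blast
  have rw: "rev w = last w # tl (rev w)" using assms(2) by (metis hd_rev list.collapse rev_is_Nil_conv)
  have s: "successively adj (w @ tl (rev w))" using succ_join[OF assms(1), of "last w" "tl (rev w)"] r rw assms(2) by simp
  have "last (w @ tl (rev w)) = infv"
  proof (cases "tl (rev w) = []")
    case True then show ?thesis using assms rw
      by (metis append.right_neutral hd_rev last_rev list.sel(1) rev_singleton_conv)
  next
    case False then have "last (tl (rev w)) = last (rev w)" by (metis last_tl)
    then show ?thesis using False assms by (simp add: last_rev)
  qed
  then show ?thesis unfolding is_loop_alt using s assms by simp
qed

lemma collapse: "successively adj w \<Longrightarrow> w \<noteq> [] \<Longrightarrow> hd w = infv \<Longrightarrow> loop_eq (w @ tl (rev w)) [infv]"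
proof (induction w rule: rev_induct)
  case Nil then show ?case by simp
next
  case (snoc x w0)
  show ?case
  proof (cases w0 rule: rev_exhaust)
    case Nil
    then have "x = infv" using snoc.prems(3) by simp
    then show ?thesis using Nil loop_eq_refl[of "[infv]"] by simp
  next
    case (snoc a' y)
    have ne: "w0 \<noteq> []" using \<open>w0 = a' @ [y]\<close> by simp
    have w0: "successively adj w0" "w0 \<noteq> []" "hd w0 = infv"
      using snoc.prems(1) apply (simp add: successively_append_iff)
      using ne apply simp
      using snoc.prems(3) ne by simp
    have e1: "(w0 @ [x]) @ tl (rev (w0 @ [x])) = a' @ [y, x, y] @ rev a'" using snoc by simp
    have e2: "w0 @ tl (rev w0) = a' @ [y] @ rev a'" using snoc by simp
    have "ep_step (a' @ [y, x, y] @ rev a') (a' @ [y] @ rev a')" unfolding ep_step_def by blast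
    moreover have "is_loop (a' @ [y, x, y] @ rev a')" using pal_loop[of "w0 @ [x]"] snoc.prems e1 by simp
    moreover have "is_loop (a' @ [y] @ rev a')" using pal_loop[OF w0] e2 by simp
    ultimately have "loop_eq ((w0 @ [x]) @ tl (rev (w0 @ [x]))) (w0 @ tl (rev w0))"
      using loop_eq_step e1 e2 by metis
    then show ?thesis using snoc.IH[OF w0] loop_eq_trans by blast
  qed
qed

lemma pi1_group: "group (pi1 :: ('a::comm_ring_1 \<times> 'a) set list set monoid)"
proof (rule groupI)
  fix x y :: "('a \<times> 'a) set list set"
  assume "x \<in> carrier pi1" "y \<in> carrier pi1"
  then obtain xs ys where "x = loop_class xs" "is_loop xs" "y = loop_class ys" "is_loop ys"
    unfolding pi1_carrier by blast
  then show "x \<otimes>\<^bsub>pi1\<^esub> y \<in> carrier pi1" using pi1_mult cat_loop unfolding pi1_carrier by blast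
next
  show "\<one>\<^bsub>pi1\<^esub> \<in> carrier (pi1 :: ('a \<times> 'a) set list set monoid)"
    unfolding pi1_carrier pi1_one using is_loop_one by blast
next
  fix x y z :: "('a \<times> 'a) set list set"
  assume "x \<in> carrier pi1" "y \<in> carrier pi1" "z \<in> carrier pi1"
  then obtain xs ys zs where l: "x = loop_class xs" "is_loop xs" "y = loop_class ys" "is_loop ys"
     "z = loop_class zs" "is_loop zs"
    unfolding pi1_carrier by blast
  have "ys \<noteq> []" using l unfolding is_loop_def by blast
  then have "(xs @ tl ys) @ tl zs = xs @ tl (ys @ tl zs)" by simp
  then show "x \<otimes>\<^bsub>pi1\<^esub> y \<otimes>\<^bsub>pi1\<^esub> z = x \<otimes>\<^bsub>pi1\<^esub> (y \<otimes>\<^bsub>pi1\<^esub> z)"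
    using l pi1_mult cat_loop by metis
next
  fix x :: "('a \<times> 'a) set list set"
  assume "x \<in> carrier pi1"
  then obtain xs where l: "x = loop_class xs" "is_loop xs" unfolding pi1_carrier by blast
  then have "[infv] @ tl xs = xs" unfolding is_loop_def by (metis append_Cons append_Nil list.collapse)
  then show "\<one>\<^bsub>pi1\<^esub> \<otimes>\<^bsub>pi1\<^esub> x = x" using pi1_mult[OF is_loop_one l(2)] l(1) pi1_one by metis
next
  fix x :: "('a \<times> 'a) set list set"
  assume "x \<in> carrier pi1"
  then obtain xs where l: "x = loop_class xs" "is_loop xs" unfolding pi1_carrier by blast
  have xs: "successively adj (rev xs)" "rev xs \<noteq> []" "hd (rev xs) = infv"
    using l(2) succ_rev_adj unfolding is_loop_alt by (auto simp: hd_rev)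
  have rl: "is_loop (rev xs)" using l(2) succ_rev_adj unfolding is_loop_alt by (auto simp: hd_rev last_rev)
  have "loop_eq (rev xs @ tl xs) [infv]" using collapse[OF xs] by simp
  then have "loop_class (rev xs) \<otimes>\<^bsub>pi1\<^esub> x = \<one>\<^bsub>pi1\<^esub>"
    using pi1_mult[OF rl l(2)] l(1) pi1_one loop_class_eq_iff by metis
  moreover have "loop_class (rev xs) \<in> carrier pi1" using rl unfolding pi1_carrier by blast
  ultimately show "\<exists>y\<in>carrier pi1. y \<otimes>\<^bsub>pi1\<^esub> x = \<one>\<^bsub>pi1\<^esub>" by blast
qed


lemma sym_eq: "sym (X, as) = loop_class (loopv X as)"
  unfolding sym_def sym_loop_loopv ..

lemma Syms_intro: "mdet X = 1 \<Longrightarrow> is_loop (loopv X bs) \<Longrightarrow> (X, bs) \<in> Syms"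
  unfolding Syms_loopv is_loop_alt by simp

lemma Syms_mdet: "(X, as) \<in> Syms \<Longrightarrow> mdet X = 1"
  unfolding Syms_loopv by simp

lemma Syms_T: "(X, as) \<in> Syms \<Longrightarrow> Eprod as ** X \<in> Bgrp"
  unfolding Syms_def by simp

lemma sl_inv_mul: "mdet T = 1 \<Longrightarrow> sl_inv T ** T = mone"
  by (cases T) (simp add: mone_def algebra_simps)

lemma Z_lower: assumes "Y \<in> Bgrp" "T \<in> Bgrp"
  shows "\<exists>d e d'. Y ** sl_inv T = M2 d 0 e d' \<and> d * d' = 1"
proof -
  obtain y1 y3 y4 where Y: "Y = M2 y1 0 y3 y4" "y1 * y4 = 1" using assms(1) unfolding Bgrp_def SL2_def by auto
  obtain t1 t3 t4 where T: "T = M2 t1 0 t3 t4" "t1 * t4 = 1" using assms(2) unfolding Bgrp_def SL2_def by auto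
  have "(y1 * t4) * (y4 * t1) = (y1 * y4) * (t1 * t4)" by (simp add: algebra_simps)
  then have "(y1 * t4) * (y4 * t1) = 1" using Y T by simp
  then show ?thesis using Y T by simp
qed

lemma concat_props: assumes p: "p \<in> Syms" and q: "q \<in> Syms"
  shows "sym_loop (concat_sym p q) = sym_loop p @ tl (sym_loop q) \<and> concat_sym p q \<in> Syms"
proof -
  obtain X as where pp: "p = (X, as)" by (cases p)
  obtain Y bs where qq: "q = (Y, bs)" by (cases q)
  define T where "T = Eprod as ** X"
  have TB: "T \<in> Bgrp" using p pp Syms_T T_def by blast
  have YB: "Y \<in> Bgrp" using q qq unfolding Syms_def by simp
  define Z where "Z = Y ** sl_inv T"
  obtain d e d' where Z: "Z = M2 d 0 e d'" "d * d' = 1" using Z_lower[OF YB TB] Z_def by blast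
  have ZT: "Z ** T = Y" unfolding Z_def using sl_inv_mul[OF Bgrp_mdet[OF TB]] by (simp add: mmul_assoc)
  have cs: "concat_sym p q = (X, as @ twist d e bs)"
    unfolding concat_sym_def pp qq Tsym_def using Z Z_def T_def by simp
  have "loopv X (as @ twist d e bs) = butlast (loopv X as) @ loopv T (twist d e bs)"
    unfolding T_def by (rule loopv_append)
  also have "loopv T (twist d e bs) = loopv Y bs"
    using loopv_twist[OF Z(2), of e T bs] ZT Z(1) by simp
  also have "butlast (loopv X as) @ loopv Y bs = loopv X as @ tl (loopv Y bs)"
    using cat_eq[OF Syms_is_loop Syms_is_loop, of X as Y bs] p q pp qq by simp
  finally have L: "loopv X (as @ twist d e bs) = loopv X as @ tl (loopv Y bs)" .
  have "is_loop (loopv X (as @ twist d e bs))" unfolding L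
    using cat_loop Syms_is_loop p q pp qq by blast
  then have "(X, as @ twist d e bs) \<in> Syms" using Syms_intro Syms_mdet p pp by blast
  then show ?thesis using L cs pp qq by (simp add: sym_loop_loopv)
qed

lemma ep_class: "is_loop xs \<Longrightarrow> is_loop ys \<Longrightarrow> ep_step xs ys \<Longrightarrow> loop_class xs = loop_class ys"
  using loop_class_eq_iff loop_eq_step by blast

lemma loopv_butlast: "loopv X as = butlast (loopv X as) @ [V (Eprod as ** X)]"
  by (metis append_butlast_last_id loopv_last loopv_ne)

lemma rels_pi1: "rels pi1 (sym :: 'a::comm_ring_1 mat2 \<times> 'a list \<Rightarrow> _)"
  unfolding rels_def
proof (intro conjI allI impI ballI)
  fix p q :: "'a mat2 \<times> 'a list" assume p: "p \<in> Syms" and q: "q \<in> Syms"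
  have "sym p \<otimes>\<^bsub>pi1\<^esub> sym q = loop_class (sym_loop p @ tl (sym_loop q))"
    using pi1_mult[of "sym_loop p" "sym_loop q"] Syms_is_loop p q unfolding sym_def
    by (metis prod.collapse sym_loop_loopv)
  then show "sym p \<otimes>\<^bsub>pi1\<^esub> sym q = sym (concat_sym p q)"
    using concat_props[OF p q] unfolding sym_def by simp
next
  fix X :: "'a mat2" assume "X \<in> Bgrp"
  then have "V X = infv" using V_infv Bgrp_mdet by blast
  then show "sym (X, []) = \<one>\<^bsub>pi1\<^esub>" unfolding sym_eq pi1_one by simp
next
  fix X :: "'a mat2" and as a
  assume h: "(X, as @ [a, 0]) \<in> Syms" "(X, as) \<in> Syms"
  define T where "T = Eprod as ** X"
  have "loopv X (as @ [a, 0]) = butlast (loopv X as) @ [V T, V (Emat a ** T), V T]"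
    unfolding T_def loopv_append[of X as] step3a ..
  moreover have "loopv X as = butlast (loopv X as) @ [V T] @ []" using loopv_butlast T_def by simp
  ultimately have "ep_step (loopv X (as @ [a, 0])) (loopv X as)" unfolding ep_step_def by fastforce
  then show "sym (X, as @ [a, 0]) = sym (X, as)" unfolding sym_eq using ep_class Syms_is_loop h by blast
next
  fix X :: "'a mat2" and as a b cs
  assume h: "(X, as @ [a, 0, b] @ cs) \<in> Syms" "(X, as @ [a + b] @ cs) \<in> Syms"
  define T where "T = Eprod as ** X"
  have "loopv X (as @ [a, 0, b] @ cs) = butlast (loopv X as) @ [V T, V (Emat a ** T), V T] @ loopv (Emat (a + b) ** T) cs"
    unfolding T_def loopv_append[of X as] by (simp add: step3b del: loopv.simps)
  moreover have "loopv X (as @ [a + b] @ cs) = butlast (loopv X as) @ [V T] @ loopv (Emat (a + b) ** T) cs"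
    unfolding T_def loopv_append[of X as] by simp
  ultimately have "ep_step (loopv X (as @ [a, 0, b] @ cs)) (loopv X (as @ [a + b] @ cs))"
    unfolding ep_step_def by fastforce
  then show "sym (X, as @ [a, 0, b] @ cs) = sym (X, as @ [a + b] @ cs)"
    unfolding sym_eq using ep_class Syms_is_loop h by blast
next
  fix X :: "'a mat2" and as a u
  assume u: "u dvd 1" and h: "(X, as @ [a, u]) \<in> Syms" "(X, as @ [a - uinv u]) \<in> Syms"
  define T where "T = Eprod as ** X"
  have T1: "mdet T = 1" using Syms_mdet h(1) T_def by (simp add: mdet_mul)
  have "loopv X (as @ [a, u]) = butlast (loopv X as) @ [V T, V (Emat a ** T), V (Emat (a - uinv u) ** T)] @ []"
    unfolding T_def loopv_append[of X as] step4a[OF u] by simp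
  moreover have "loopv X (as @ [a - uinv u]) = butlast (loopv X as) @ [V T, V (Emat (a - uinv u) ** T)] @ []"
    unfolding T_def loopv_append[of X as] by simp
  moreover have "simplex2 (V T) (V (Emat a ** T)) (V (Emat (a - uinv u) ** T))"
  proof -
    have "V (Emat u ** (Emat a ** T)) = V (Emat (a - uinv u) ** T)"
      using step4a[OF u, of T a] by simp
    then show ?thesis unfolding simplex2_def using adj_E T1 mdet_E_mul by metis
  qed
  ultimately have "ep_step (loopv X (as @ [a, u])) (loopv X (as @ [a - uinv u]))"
    unfolding ep_step_def by blast
  then show "sym (X, as @ [a, u]) = sym (X, as @ [a - uinv u])"
    unfolding sym_eq using ep_class Syms_is_loop h by blast
next
  fix X :: "'a mat2" and as a u b cs
  assume u: "u dvd 1" and h: "(X, as @ [a, u, b] @ cs) \<in> Syms"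
    "(X, as @ [a - uinv u, u^2 * b - u] @ altmul u cs) \<in> Syms"
  define T where "T = Eprod as ** X"
  define R where "R = loopv (Emat (u^2 * b - u) ** (Emat (a - uinv u) ** T)) (altmul u cs)"
  have T1: "mdet T = 1" using Syms_mdet h(1) T_def by (simp add: mdet_mul)
  have "loopv X (as @ [a, u, b] @ cs) = butlast (loopv X as) @ [V T, V (Emat a ** T), V (Emat (a - uinv u) ** T)] @ R"
    unfolding T_def R_def loopv_append[of X as] using step4b[OF u] by simp
  moreover have "loopv X (as @ [a - uinv u, u^2 * b - u] @ altmul u cs) = butlast (loopv X as) @ [V T, V (Emat (a - uinv u) ** T)] @ R"
    unfolding T_def R_def loopv_append[of X as] by simp
  moreover have "simplex2 (V T) (V (Emat a ** T)) (V (Emat (a - uinv u) ** T))"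
  proof -
    have "V (Emat u ** (Emat a ** T)) = V (Emat (a - uinv u) ** T)"
      using step4a[OF u, of T a] by simp
    then show ?thesis unfolding simplex2_def using adj_E T1 mdet_E_mul by metis
  qed
  ultimately have "ep_step (loopv X (as @ [a, u, b] @ cs)) (loopv X (as @ [a - uinv u, u^2 * b - u] @ altmul u cs))"
    unfolding ep_step_def by blast
  then show "sym (X, as @ [a, u, b] @ cs) = sym (X, as @ [a - uinv u, u^2 * b - u] @ altmul u cs)"
    unfolding sym_eq using ep_class Syms_is_loop h by blast
qed


lemma loopv_split: "loopv M as = l @ [a, b, c] @ r \<Longrightarrow> \<exists>as1 x y as2. as = as1 @ x # y # as2 \<and>
   l = butlast (loopv M as1) \<and> a = V (Eprod as1 ** M) \<and> b = V (Emat x ** (Eprod as1 ** M)) \<and>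
   c = V (Emat y ** (Emat x ** (Eprod as1 ** M))) \<and> r = tl (loopv (Emat y ** (Emat x ** (Eprod as1 ** M))) as2)"
proof (induction l arbitrary: M as)
  case Nil
  have "length as \<ge> 2" using arg_cong[OF Nil.prems, of length] by simp
  then obtain x as' where as: "as = x # as'" by (cases as) auto
  then obtain y as2 where as': "as' = y # as2" using \<open>length as \<ge> 2\<close> by (cases as') auto
  define N where "N = Emat y ** (Emat x ** M)"
  have "loopv M as = V M # V (Emat x ** M) # V N # tl (loopv N as2)"
    unfolding as as' N_def by simp (metis list.collapse loopv_hd loopv_ne)
  then have "a = V M" "b = V (Emat x ** M)" "c = V N" "r = tl (loopv N as2)" using Nil.prems by simp_all
  then show ?case using as as' N_def by (intro exI[of _ "[]"] exI[of _ x] exI[of _ y] exI[of _ as2]) simp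
next
  case (Cons l0 l')
  have "length as \<ge> 1" using arg_cong[OF Cons.prems, of length] by simp
  then obtain z as' where as: "as = z # as'" by (cases as) auto
  have "loopv (Emat z ** M) as' = l' @ [a, b, c] @ r" "l0 = V M" using Cons.prems as by simp_all
  then obtain as1 x y as2 where h: "as' = as1 @ x # y # as2"
   "l' = butlast (loopv (Emat z ** M) as1)" "a = V (Eprod as1 ** (Emat z ** M))" "b = V (Emat x ** (Eprod as1 ** (Emat z ** M)))"
   "c = V (Emat y ** (Emat x ** (Eprod as1 ** (Emat z ** M))))" "r = tl (loopv (Emat y ** (Emat x ** (Eprod as1 ** (Emat z ** M)))) as2)"
    using Cons.IH by blast
  have e: "Eprod (z # as1) ** M = Eprod as1 ** (Emat z ** M)" by (simp add: Eprod_Cons mmul_assoc)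
  have "butlast (loopv M (z # as1)) = l0 # l'" using h(2) \<open>l0 = V M\<close> by simp
  then show ?case using h e as
    by (intro exI[of _ "z # as1"] exI[of _ x] exI[of _ y] exI[of _ as2]) simp
qed

lemma step3b': "loopv (Emat z ** (Emat 0 ** (Emat x ** M))) cs = loopv (Emat (x + z) ** M) cs"
  using step3b[of M x z cs] by simp

lemma step4a': "y dvd 1 \<Longrightarrow> V (Emat y ** (Emat x ** M)) = V (Emat (x - uinv y) ** M)"
  using step4a[of y M x] by simp

lemma step4b': "y dvd 1 \<Longrightarrow> loopv (Emat z ** (Emat y ** (Emat x ** M))) cs =
   loopv (Emat (y^2 * z - y) ** (Emat (x - uinv y) ** M)) (altmul y cs)"
  using step4b[of y M x z cs] by simp

context
  fixes H :: "'h monoid" and f :: "'a::comm_ring_1 mat2 \<times> 'a list \<Rightarrow> 'h"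
  assumes grp: "group H" and fc: "f \<in> Syms \<rightarrow> carrier H" and rl: "rels H f"
begin

lemma R1: "p \<in> Syms \<Longrightarrow> q \<in> Syms \<Longrightarrow> concat_sym p q \<in> Syms \<Longrightarrow> f p \<otimes>\<^bsub>H\<^esub> f q = f (concat_sym p q)"
  using rl[unfolded rels_def, THEN conjunct1] by blast
lemma R2: "X \<in> Bgrp \<Longrightarrow> f (X, []) = \<one>\<^bsub>H\<^esub>"
  using rl[unfolded rels_def, THEN conjunct2[THEN conjunct1]] by blast
lemma R3a: "(X, as @ [a, 0]) \<in> Syms \<Longrightarrow> (X, as) \<in> Syms \<Longrightarrow> f (X, as @ [a, 0]) = f (X, as)"
  using rl[unfolded rels_def, THEN conjunct2[THEN conjunct2, THEN conjunct1]] by blast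
lemma R3b: "(X, as @ [a, 0, b] @ cs) \<in> Syms \<Longrightarrow> (X, as @ [a + b] @ cs) \<in> Syms \<Longrightarrow>
        f (X, as @ [a, 0, b] @ cs) = f (X, as @ [a + b] @ cs)"
  using rl[unfolded rels_def, THEN conjunct2[THEN conjunct2, THEN conjunct2, THEN conjunct1]] by blast
lemma R4a: "u dvd 1 \<Longrightarrow> (X, as @ [a, u]) \<in> Syms \<Longrightarrow> (X, as @ [a - uinv u]) \<in> Syms \<Longrightarrow>
        f (X, as @ [a, u]) = f (X, as @ [a - uinv u])"
  using rl[unfolded rels_def, THEN conjunct2[THEN conjunct2, THEN conjunct2, THEN conjunct2, THEN conjunct1]] by blast
lemma R4b: "u dvd 1 \<Longrightarrow> (X, as @ [a, u, b] @ cs) \<in> Syms \<Longrightarrow>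
        (X, as @ [a - uinv u, u^2 * b - u] @ altmul u cs) \<in> Syms \<Longrightarrow>
        f (X, as @ [a, u, b] @ cs) = f (X, as @ [a - uinv u, u^2 * b - u] @ altmul u cs)"
  using rl[unfolded rels_def, THEN conjunct2[THEN conjunct2, THEN conjunct2, THEN conjunct2, THEN conjunct2]] by blast

lemma key: assumes as: "(mone, as) \<in> Syms" and st: "ep_step (loopv mone as) ys" and yl: "is_loop ys"
  shows "\<exists>bs. (mone, bs) \<in> Syms \<and> loopv mone bs = ys \<and> f (mone, as) = f (mone, bs)"
proof -
  obtain l a b c r where xs: "loopv mone as = l @ [a, b, c] @ r"
    and cs: "(a = c \<and> ys = l @ [a] @ r) \<or> (simplex2 a b c \<and> ys = l @ [a, c] @ r)"
    using st unfolding ep_step_def by blast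
  obtain as1 x y as2 where sp: "as = as1 @ x # y # as2" "l = butlast (loopv mone as1)"
    "a = V (Eprod as1 ** mone)" "b = V (Emat x ** (Eprod as1 ** mone))"
    "c = V (Emat y ** (Emat x ** (Eprod as1 ** mone)))"
    "r = tl (loopv (Emat y ** (Emat x ** (Eprod as1 ** mone))) as2)"
    using loopv_split[OF xs] by blast
  define T where "T = Eprod as1 ** mone"
  have T1: "mdet T = 1" unfolding T_def by (simp add: mdet_mul)
  have lT: "loopv mone as1 = l @ [a]" using loopv_butlast[of mone as1] sp(2,3) by simp
  have ex: "\<exists>bs. loopv mone bs = ys \<and> f (mone, as) = f (mone, bs)"
  proof (cases "a = c \<and> ys = l @ [a] @ r")
    case True
    then have "V T = V (Emat y ** Emat x ** T)" using sp T_def by (simp add: mmul_assoc)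
    then have y0: "y = 0" using V_EE_eq T1 by blast
    show ?thesis
    proof (cases as2)
      case Nil
      then have "r = []" using sp by simp
      then have L: "loopv mone as1 = ys" using True lT by simp
      have "(mone, as1) \<in> Syms" by (rule Syms_intro[OF mdet_mone]) (simp add: L yl)
      moreover have "as = as1 @ [x, 0]" using sp Nil y0 by simp
      ultimately have "f (mone, as) = f (mone, as1)" using R3a as by simp
      then show ?thesis using L by blast
    next
      case (Cons z as3)
      define bs where "bs = as1 @ [x + z] @ as3"
      have "r = loopv (Emat (x + z) ** T) as3" using sp Cons y0 step3b' T_def by simp
      then have L: "loopv mone bs = ys" unfolding bs_def loopv_append[of mone as1]
        using True sp T_def by simp
      have "(mone, bs) \<in> Syms" by (rule Syms_intro[OF mdet_mone]) (simp add: L yl)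
      moreover have "as = as1 @ [x, 0, z] @ as3" using sp Cons y0 by simp
      ultimately have "f (mone, as) = f (mone, bs)" using R3b as bs_def by simp
      then show ?thesis using L by blast
    qed
  next
    case False
    then have F: "simplex2 a b c" "ys = l @ [a, c] @ r" using cs by blast+
    then have "adj (V T) (V (Emat y ** Emat x ** T))" using sp T_def unfolding simplex2_def by (simp add: mmul_assoc)
    then have yu: "y dvd 1" using adj_EE T1 by blast
    have cc: "c = V (Emat (x - uinv y) ** T)" using sp step4a'[OF yu] T_def by simp
    show ?thesis
    proof (cases as2)
      case Nil
      define bs where "bs = as1 @ [x - uinv y]"
      have "r = []" using sp Nil by simp
      then have L: "loopv mone bs = ys" unfolding bs_def loopv_append[of mone as1]
        using F sp T_def cc by simp
      have "(mone, bs) \<in> Syms" by (rule Syms_intro[OF mdet_mone]) (simp add: L yl)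
      moreover have "as = as1 @ [x, y]" using sp Nil by simp
      ultimately have "f (mone, as) = f (mone, bs)" using R4a[OF yu] as bs_def by simp
      then show ?thesis using L by blast
    next
      case (Cons z as3)
      define bs where "bs = as1 @ [x - uinv y, y^2 * z - y] @ altmul y as3"
      have "r = loopv (Emat (y^2 * z - y) ** (Emat (x - uinv y) ** T)) (altmul y as3)"
        using sp Cons step4b'[OF yu] T_def by simp
      then have L: "loopv mone bs = ys" unfolding bs_def loopv_append[of mone as1]
        using F sp T_def cc by simp
      have "(mone, bs) \<in> Syms" by (rule Syms_intro[OF mdet_mone]) (simp add: L yl)
      moreover have "as = as1 @ [x, y, z] @ as3" using sp Cons by simp
      ultimately have "f (mone, as) = f (mone, bs)" using R4b[OF yu] as bs_def by simp
      then show ?thesis using L by blast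
    qed
  qed
  then obtain bs where "loopv mone bs = ys" "f (mone, as) = f (mone, bs)" by blast
  moreover have "(mone, bs) \<in> Syms" by (rule Syms_intro[OF mdet_mone]) (simp add: calculation yl)
  ultimately show ?thesis by blast
qed

end


definition Fl :: "('a::comm_ring_1 mat2 \<times> 'a list \<Rightarrow> 'h) \<Rightarrow> ('a \<times> 'a) set list \<Rightarrow> 'h" where
  "Fl f xs = f (mone, THE as. loopv mone as = xs)"

lemma Fl_loopv: "Fl f (loopv mone as) = f (mone, as)"
proof -
  have "(THE bs. loopv mone bs = loopv mone as) = as"
    by (rule the_equality) (auto dest: loopv_inj[OF mdet_mone])
  then show ?thesis unfolding Fl_def by simp
qed

lemma mone_Syms: "(mone, []) \<in> Syms" unfolding Syms_def using mone_Bgrp by simp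

context
  fixes H :: "'h monoid" and f :: "'a::comm_ring_1 mat2 \<times> 'a list \<Rightarrow> 'h"
  assumes grp: "group H" and fc: "f \<in> Syms \<rightarrow> carrier H" and rl: "rels H f"
begin

lemma Fl_inv: assumes "loop_eq xs ys" "is_loop xs" shows "Fl f xs = Fl f ys"
  using assms unfolding loop_eq_def
proof (induction rule: equivclp_induct)
  case base then show ?case by simp
next
  case (step y z)
  have yz: "is_loop y" "is_loop z" "ep_step y z \<or> ep_step z y" using step(2) by auto
  have "Fl f y = Fl f z"
  proof (cases "ep_step y z")
    case True
    obtain as where as: "(mone, as) \<in> Syms" "loopv mone as = y" using loop_surj yz(1) by blast
    obtain bs where "loopv mone bs = z" "f (mone, as) = f (mone, bs)"
      using key[OF grp fc rl as(1), of z] True as(2) yz(2) by blast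
    then show ?thesis using as(2) Fl_loopv by metis
  next
    case False
    then have st: "ep_step z y" using yz(3) by blast
    obtain as where as: "(mone, as) \<in> Syms" "loopv mone as = z" using loop_surj yz(2) by blast
    obtain bs where "loopv mone bs = y" "f (mone, as) = f (mone, bs)"
      using key[OF grp fc rl as(1), of y] st as(2) yz(1) by blast
    then show ?thesis using as(2) Fl_loopv by metis
  qed
  then show ?case using step by auto
qed

lemma f_Fl: assumes s: "s \<in> Syms" shows "f s = Fl f (sym_loop s)"
proof -
  define c where "c = concat_sym (mone, []) s"
  have cp: "sym_loop c = sym_loop (mone, []) @ tl (sym_loop s)" "c \<in> Syms"
    using concat_props[OF mone_Syms s] c_def by auto
  have fc1: "fst c = mone" unfolding c_def concat_sym_def by (simp add: Let_def)
  have "is_loop (sym_loop s)" using Syms_is_loop s by (metis prod.collapse sym_loop_loopv)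
  then have "sym_loop (mone, []) @ tl (sym_loop s) = sym_loop s"
    unfolding is_loop_def sym_loop_loopv by (simp add: V_mone infv_def[symmetric])
      (metis append_Cons append_Nil list.collapse)
  then have sc: "sym_loop c = sym_loop s" using cp by simp
  have "f (mone, []) \<otimes>\<^bsub>H\<^esub> f s = f c" using R1[OF grp fc rl mone_Syms s] cp c_def by simp
  moreover have "f (mone, []) = \<one>\<^bsub>H\<^esub>" using R2[OF grp fc rl mone_Bgrp] .
  moreover have "f s \<in> carrier H" using fc s by blast
  ultimately have "f s = f c" using group.is_monoid[OF grp] by (metis monoid.l_one)
  also have "\<dots> = f (mone, snd c)" using fc1 by (metis prod.collapse)
  also have "\<dots> = Fl f (loopv mone (snd c))" using Fl_loopv by metis
  also have "loopv mone (snd c) = sym_loop c" using fc1 sym_loop_loopv by (metis prod.collapse)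
  finally show ?thesis using sc by simp
qed

definition hh :: "('a \<times> 'a) set list set \<Rightarrow> 'h" where
  "hh C = Fl f (SOME xs. xs \<in> C \<and> is_loop xs)"

lemma hh_class: assumes "is_loop xs" shows "hh (loop_class xs) = Fl f xs"
proof -
  have "\<exists>ys. ys \<in> loop_class xs \<and> is_loop ys" using assms loop_class_mem by blast
  then have "(SOME ys. ys \<in> loop_class xs \<and> is_loop ys) \<in> loop_class xs" by (rule someI_ex[THEN conjunct1])
  then have "loop_eq xs (SOME ys. ys \<in> loop_class xs \<and> is_loop ys)" unfolding loop_class_def by simp
  then show ?thesis unfolding hh_def using Fl_inv assms by metis
qed

lemma univ: "\<exists>h \<in> hom pi1 H. \<forall>s\<in>Syms. h (sym s) = f s"
proof (rule bexI[of _ hh])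
  show "\<forall>s\<in>Syms. hh (sym s) = f s"
  proof
    fix s :: "'a mat2 \<times> 'a list" assume s: "s \<in> Syms"
    have "is_loop (sym_loop s)" using Syms_is_loop s by (metis prod.collapse sym_loop_loopv)
    then show "hh (sym s) = f s" unfolding sym_def using hh_class f_Fl[OF s] by simp
  qed
next
  show "hh \<in> hom pi1 H" unfolding hom_def
  proof (intro CollectI conjI ballI)
    show "hh \<in> carrier pi1 \<rightarrow> carrier H"
    proof
      fix C :: "('a \<times> 'a) set list set" assume "C \<in> carrier pi1"
      then obtain xs where xs: "C = loop_class xs" "is_loop xs" unfolding pi1_carrier by blast
      obtain as where as: "(mone, as) \<in> Syms" "loopv mone as = xs" using loop_surj xs(2) by blast
      have "hh C = f (mone, as)" using hh_class xs as Fl_loopv by metis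
      then show "hh C \<in> carrier H" using fc as by auto
    qed
  next
    fix C D :: "('a \<times> 'a) set list set" assume "C \<in> carrier pi1" "D \<in> carrier pi1"
    then obtain xs ys where xs: "C = loop_class xs" "is_loop xs" "D = loop_class ys" "is_loop ys"
      unfolding pi1_carrier by blast
    obtain as where as: "(mone, as) \<in> Syms" "loopv mone as = xs" using loop_surj xs(2) by blast
    obtain bs where bs: "(mone, bs) \<in> Syms" "loopv mone bs = ys" using loop_surj xs(4) by blast
    have cp: "sym_loop (concat_sym (mone, as) (mone, bs)) = xs @ tl ys" "concat_sym (mone, as) (mone, bs) \<in> Syms"
      using concat_props[OF as(1) bs(1)] as(2) bs(2) by (simp_all add: sym_loop_loopv)
    have "C \<otimes>\<^bsub>pi1\<^esub> D = loop_class (xs @ tl ys)" using pi1_mult xs by simp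
    then have "hh (C \<otimes>\<^bsub>pi1\<^esub> D) = Fl f (xs @ tl ys)" using hh_class[OF cat_loop[OF xs(2) xs(4)]] by simp
    also have "\<dots> = f (concat_sym (mone, as) (mone, bs))" using f_Fl[OF cp(2)] cp(1) by simp
    also have "\<dots> = f (mone, as) \<otimes>\<^bsub>H\<^esub> f (mone, bs)" using R1[OF grp fc rl as(1) bs(1) cp(2)] by simp
    also have "\<dots> = hh C \<otimes>\<^bsub>H\<^esub> hh D" using hh_class xs as bs Fl_loopv by metis
    finally show "hh (C \<otimes>\<^bsub>pi1\<^esub> D) = hh C \<otimes>\<^bsub>H\<^esub> hh D" .
  qed
qed

end

lemma generation: "carrier (pi1 :: ('a::comm_ring_1 \<times> 'a) set list set monoid) =
   generate pi1 (sym ` (Syms :: ('a mat2 \<times> 'a list) set))"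
proof
  show "carrier (pi1 :: ('a \<times> 'a) set list set monoid) \<subseteq> generate pi1 (sym ` (Syms :: ('a mat2 \<times> 'a list) set))"
  proof
    fix C :: "('a \<times> 'a) set list set" assume "C \<in> carrier pi1"
    then obtain xs where xs: "C = loop_class xs" "is_loop xs" unfolding pi1_carrier by blast
    obtain as where as: "(mone, as) \<in> Syms" "loopv mone as = xs" using loop_surj xs(2) by blast
    have "C = sym (mone, as)" using xs as sym_eq by metis
    then have "C \<in> sym ` (Syms :: ('a mat2 \<times> 'a list) set)" using as by blast
    then show "C \<in> generate pi1 (sym ` (Syms :: ('a mat2 \<times> 'a list) set))" by (rule generate.incl)
  qed
next
  have "sym ` (Syms :: ('a mat2 \<times> 'a list) set) \<subseteq> carrier pi1"
  proof
    fix C assume "C \<in> sym ` (Syms :: ('a mat2 \<times> 'a list) set)"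
    then obtain s where s: "s \<in> Syms" "C = sym s" by blast
    have "is_loop (sym_loop s)" using Syms_is_loop s(1) by (metis prod.collapse sym_loop_loopv)
    then show "C \<in> carrier pi1" unfolding s(2) sym_def pi1_carrier by blast
  qed
  then show "generate pi1 (sym ` (Syms :: ('a mat2 \<times> 'a list) set)) \<subseteq> carrier (pi1 :: ('a \<times> 'a) set list set monoid)"
    using group.generate_in_carrier[OF pi1_group] by blast
qed

theorem theorem6p1:
  shows "group (pi1 :: ('a::comm_ring_1 \<times> 'a) set list set monoid) \<and>
    carrier (pi1 :: ('a \<times> 'a) set list set monoid) = generate pi1 (sym ` (Syms :: ('a mat2 \<times> 'a list) set)) \<and>
    rels (pi1 :: ('a \<times> 'a) set list set monoid) (sym :: 'a mat2 \<times> 'a list \<Rightarrow> _) \<and>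
    (\<forall>(H :: 'h monoid) (f :: 'a mat2 \<times> 'a list \<Rightarrow> 'h).
       group H \<longrightarrow> f \<in> Syms \<rightarrow> carrier H \<longrightarrow> rels H f \<longrightarrow>
       (\<exists>h \<in> hom pi1 H. \<forall>s\<in>Syms. h (sym s) = f s))"
  using pi1_group generation rels_pi1 univ by blast


end
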